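(* Let $G=(V,E)$ be a finite simple undirected graph with zipper constraint collection $\mathcal{Z}$, let $D\subseteq Z^2$, and let $\mathbb{S}\subseteq D$ be a prescription on $D$. Let $S^+\subseteq V^+$ be a set of vertices of the augmented graph $G^+(\mathbb{S})$, and let $S\subseteq V$ be its distillate. Then $S^+$ is a clique in $G^+(\mathbb{S})$ if and only if $S$ is a clique in $G'=(V,E\setminus(D\setminus\mathbb{S}))$.
   Context: A zipper constraint collection for $G$ is a finite set $\mathcal{Z}=\{(U_1,W_1,y_1),\dots,(U_m,W_m,y_m)\}$, where each $U_i,W_i\in E$ is an edge of $G$ (a 2-element subset of $V$) and each $y_i$ is a label. Let $Z^2=\{U_1,\dots,U_m,W_1,\dots,W_m\}$. A prescription on a domain $D\subseteq Z^2$ is a subset $\mathbb{S}\subseteq D$. Its elements are on pairs, and the elements of $D\setminus\mathbb{S}$ are off pairs. Let $G'=(V,E\setminus(D\setminus\mathbb{S}))$. The augmented graph $G^+(\mathbb{S})=(V^+,E^+)$ has vertex set $V^+=\{[u]:u\in V\}\cup\{[u,w]:\{u,w\}\in\mathbb{S}\}$. Each vertex $[A]$ is a new formal vertex labeled by the set $A$, which is either a singleton $\{u\}$ or a pair $\{u,w\}$. Two distinct vertices $[A],[B]$ are adjacent if and only if $A\cup B$ is a clique in $G'$. The distillate of a set $S^+=\{[A_1],\dots,[A_n]\}\subseteq V^+$ is the set $A_1\cup\dots\cup A_n\subseteq V$. *)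

theory Defs
  imports Main
begin

definition simple_graph :: "'a set \<Rightarrow> 'a set set \<Rightarrow> bool" where
  "simple_graph V E \<longleftrightarrow> finite V \<and> (\<forall>e\<in>E. e \<subseteq> V \<and> card e = 2)"

definition is_clique :: "'a set \<Rightarrow> 'a set set \<Rightarrow> 'a set \<Rightarrow> bool" where
  "is_clique V E K \<longleftrightarrow> K \<subseteq> V \<and> (\<forall>u\<in>K. \<forall>w\<in>K. u \<noteq> w \<longrightarrow> {u, w} \<in> E)"

definition zipper_collection :: "'a set set \<Rightarrow> ('a set \<times> 'a set \<times> 'b) set \<Rightarrow> bool" where
  "zipper_collection E Z \<longleftrightarrow> finite Z \<and> (\<forall>(U, W, y)\<in>Z. U \<in> E \<and> W \<in> E)"

definition Z2 :: "('a set \<times> 'a set \<times> 'b) set \<Rightarrow> 'a set set" where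
  "Z2 Z = (\<lambda>(U, W, y). U) ` Z \<union> (\<lambda>(U, W, y). W) ` Z"

definition Gprime_edges :: "'a set set \<Rightarrow> 'a set set \<Rightarrow> 'a set set \<Rightarrow> 'a set set" where
  "Gprime_edges E D S = E - (D - S)"

text \<open>Formal vertices [A] of the augmented graph, labelled by a set A.\<close>
datatype 'a aug_vertex = AV (label: "'a set")

definition aug_vertices :: "'a set \<Rightarrow> 'a set set \<Rightarrow> 'a aug_vertex set" where
  "aug_vertices V S = {AV {u} | u. u \<in> V} \<union> {AV {u, w} | u w. {u, w} \<in> S}"

definition aug_adj :: "'a set \<Rightarrow> 'a set set \<Rightarrow> 'a set set \<Rightarrow> 'a set set
    \<Rightarrow> 'a aug_vertex \<Rightarrow> 'a aug_vertex \<Rightarrow> bool" where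
  "aug_adj V E D S x y \<longleftrightarrow> x \<noteq> y \<and> is_clique V (Gprime_edges E D S) (label x \<union> label y)"

definition is_aug_clique :: "'a set \<Rightarrow> 'a set set \<Rightarrow> 'a set set \<Rightarrow> 'a set set
    \<Rightarrow> 'a aug_vertex set \<Rightarrow> bool" where
  "is_aug_clique V E D S K \<longleftrightarrow> K \<subseteq> aug_vertices V S \<and>
     (\<forall>x\<in>K. \<forall>y\<in>K. x \<noteq> y \<longrightarrow> aug_adj V E D S x y)"

definition distillate :: "'a aug_vertex set \<Rightarrow> 'a set" where
  "distillate K = \<Union> (label ` K)"

end

theory Submission
  imports Defs
begin

lemma SE: assumes "zipper_collection E Z"
    and "D \<subseteq> Z2 Z"
    and "S \<subseteq> D" shows "S \<subseteq> E"
proof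
  fix e assume "e \<in> S"
  then have "e \<in> Z2 Z" using assms by blast
  then obtain U W y where "(U,W,y) \<in> Z" "e = U \<or> e = W" unfolding Z2_def by auto
  then show "e \<in> E" using assms(1) unfolding zipper_collection_def by fastforce
qed
lemma lab: assumes "simple_graph V E" "S \<subseteq> E" "x \<in> aug_vertices V S" shows "label x \<subseteq> V"
proof -
  from assms(3) consider u where "x = AV {u}" "u \<in> V" | u w where "x = AV {u,w}" "{u,w} \<in> S"
    unfolding aug_vertices_def by blast
  then show ?thesis proof cases
    case 1 then show ?thesis by simp
  next
    case 2 then have "{u,w} \<subseteq> V" using assms(1,2) unfolding simple_graph_def by blast
    then show ?thesis using 2 by simp
  qed
qed

theorem mainTheorem2:
  fixes V :: "'a set" and E :: "'a set set" and Z :: "('a set \<times> 'a set \<times> 'b) set"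
    and D S :: "'a set set" and Splus :: "'a aug_vertex set"
  assumes "simple_graph V E"
    and "zipper_collection E Z"
    and "D \<subseteq> Z2 Z"
    and "S \<subseteq> D"
    and "Splus \<subseteq> aug_vertices V S"
  shows "is_aug_clique V E D S Splus \<longleftrightarrow> is_clique V (Gprime_edges E D S) (distillate Splus)"
proof -
  have SE: "S \<subseteq> E" using SE assms(2,3,4) by blast
  have lab: "label x \<subseteq> V" if "x \<in> Splus" for x
    using lab[OF assms(1) SE] that assms(5) by blast
  have self: "{u, w} \<in> Gprime_edges E D S" if "x \<in> Splus" "u \<in> label x" "w \<in> label x" "u \<noteq> w" for x u w
  proof -
    have "x \<in> aug_vertices V S" using that assms(5) by blast
    then have "(\<exists>a. x = AV {a}) \<or> (\<exists>a b. x = AV {a, b} \<and> {a,b} \<in> S)"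
      unfolding aug_vertices_def by blast
    moreover have "\<not> (\<exists>a. x = AV {a})"
    proof
      assume "\<exists>a. x = AV {a}"
      then obtain a where "label x = {a}" by auto
      then show False using that(2,3,4) by simp
    qed
    ultimately obtain a b where "x = AV {a, b}" "{a,b} \<in> S" by blast
    then have "u \<in> {a,b}" "w \<in> {a,b}" using that by simp_all
    then have "{u,w} = {a,b}" using that(4) by blast
    then show ?thesis using \<open>{a,b} \<in> S\<close> SE unfolding Gprime_edges_def by auto
  qed
  show ?thesis
  proof
    assume h: "is_aug_clique V E D S Splus"
    show "is_clique V (Gprime_edges E D S) (distillate Splus)"
      unfolding is_clique_def distillate_def
    proof (intro conjI ballI impI)
      show "\<Union> (label ` Splus) \<subseteq> V" using lab by blast
    next
      fix u w assume "u \<in> \<Union> (label ` Splus)" "w \<in> \<Union> (label ` Splus)" "u \<noteq> w"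
      then obtain x y where xy: "x \<in> Splus" "y \<in> Splus" "u \<in> label x" "w \<in> label y" by blast
      show "{u, w} \<in> Gprime_edges E D S"
      proof (cases "x = y")
        case True then show ?thesis using self xy \<open>u \<noteq> w\<close> by blast
      next
        case False
        then have "aug_adj V E D S x y" using h xy(1,2) unfolding is_aug_clique_def by simp
        then have "is_clique V (Gprime_edges E D S) (label x \<union> label y)" unfolding aug_adj_def by simp
        moreover have "u \<in> label x \<union> label y" "w \<in> label x \<union> label y" using xy by simp_all
        ultimately show ?thesis using \<open>u \<noteq> w\<close> unfolding is_clique_def by simp
      qed
    qed
  next
    assume h: "is_clique V (Gprime_edges E D S) (distillate Splus)"
    show "is_aug_clique V E D S Splus"
      unfolding is_aug_clique_def aug_adj_def
    proof (intro conjI ballI impI)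
      show "Splus \<subseteq> aug_vertices V S" by (rule assms(5))
    next
      fix x y assume "x \<in> Splus" "y \<in> Splus" "x \<noteq> y"
      then have "label x \<union> label y \<subseteq> distillate Splus" unfolding distillate_def by blast
      then show "is_clique V (Gprime_edges E D S) (label x \<union> label y)"
        using h unfolding is_clique_def by (meson subset_trans subsetD)
    qed (simp)
  qed
qed

end
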